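(* For every $k\ge1$ and every $T\in\mathcal{GT}_k(n)$, the word $\omega(T)\in\mathrm{ACol}(C_n)^*$ is of highest weight, i.e. no Kashiwara operator $e_i$ ($1\le i\le n$) is defined on $\omega(T)$.
   Context: Type $C$ setting: $C_n=\{1<\cdots<n<\overline n<\cdots<\overline1\}$ with crystal graph $1\xrightarrow{1}2\xrightarrow{2}\cdots\xrightarrow{n-1}n\xrightarrow{n}\overline n\xrightarrow{n-1}\cdots\xrightarrow{1}\overline1$, and Kashiwara operators $e_i,f_i$ acting on $C_n^*$ by the tensor product rule. A column is a strictly increasing word; $N_z(u)$ counts letters $x\le z$ or $x\ge\overline z$; a column is admissible if nonempty with $N_z(u)\le z$ for all $z$. $\mathrm{ACol}(C_n)$ is the set of admissible columns plus a symbol $\epsilon$; $p:\mathrm{ACol}(C_n)^*\to C_n^*$ erases $\epsilon$ and sends a column to itself. $e_iw$ is defined for $w\in\mathrm{ACol}(C_n)^*$ iff $e_ip(w)$ is defined (and then it modifies the corresponding column). Blocks: $\mathfrak{c}(m)=12\cdots m$; $\mathfrak{c}(a,b)=(a+1)\cdots(a+b)$; $\mathfrak{c}(\overline a,c)=\overline a\,\overline{a-1}\cdots\overline{a-c+1}$ (empty when $b=0$ resp. $c=0$). $C$-trees: vertices are $i$ ($i\ge1$), $im$ and $im^-$ ($i,m\ge1$); levels: $i$ has level $i$, $im,im^-$ have level $i+m$; strand $i$ is ordered $i<i1<i1^-<i2<i2^-<\cdots$. A labelling of rank $k$ is $s$ from vertices of level $\le k$ to $\mathbb N$, with valuation $q(v)=s(i)+\sum_{im\le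 v}s(im)-\sum_{im^-\le v}s(im^-)$ for $v$ on strand $i$; it is an $n$-labelling if $0\le q(v)\le n$ for all such $v$. $\rho(i)=\mathfrak{c}(s(i))$; $\rho(im)=\mathfrak{c}(q(v'),s(im))$ with $v'$ the predecessor of $im$ on its strand; $\rho(im^-)=\mathfrak{c}(\overline{q(im)},s(im^-))$. Level reading: $\omega_t=\rho(t)\rho((t-1)1)\cdots\rho(1(t-1))\rho(1(t-1)^-)\rho(2(t-2)^-)\cdots\rho((t-1)1^-)$, or the letter $\epsilon$ if empty. $\mathcal{GT}_k(n)$ is the set of $n$-labellings of rank $k$ for which each $\omega_t$ ($1\le t\le k$) is $\epsilon$ or an admissible column; $\omega(T)=\omega_1\cdots\omega_k$. *)

theory Defs
  imports Main
begin

text \<open>U i stands for the letter i, B i for the barred letter \<open>\<overline>i\<close>.\<close>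
datatype letter = U nat | B nat

definition valid_letter :: "nat \<Rightarrow> letter \<Rightarrow> bool" where
  "valid_letter n x = (case x of U a \<Rightarrow> 1 \<le> a \<and> a \<le> n | B a \<Rightarrow> 1 \<le> a \<and> a \<le> n)"

text \<open>Position of a letter in the total order 1 < ... < n < \<overline>n < ... < \<overline>1.\<close>
definition pos :: "nat \<Rightarrow> letter \<Rightarrow> nat" where
  "pos n x = (case x of U a \<Rightarrow> a | B a \<Rightarrow> 2 * n + 1 - a)"

definition letter_less :: "nat \<Rightarrow> letter \<Rightarrow> letter \<Rightarrow> bool" where
  "letter_less n x y = (pos n x < pos n y)"

text \<open>e_i on single letters (partial): inverse of the arrows
  i -> i+1, \<overline>(i+1) -> \<overline>i (label i < n), n -> \<overline>n (label n).\<close>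
definition e_letter :: "nat \<Rightarrow> nat \<Rightarrow> letter \<Rightarrow> letter option" where
  "e_letter n i x =
     (if 1 \<le> i \<and> i < n then
        (case x of U a \<Rightarrow> (if a = i + 1 then Some (U i) else None)
                 | B a \<Rightarrow> (if a = i then Some (B (i + 1)) else None))
      else if i = n \<and> 1 \<le> n then
        (case x of U a \<Rightarrow> None | B a \<Rightarrow> (if a = n then Some (U n) else None))
      else None)"

definition f_letter :: "nat \<Rightarrow> nat \<Rightarrow> letter \<Rightarrow> letter option" where
  "f_letter n i x =
     (if 1 \<le> i \<and> i < n then
        (case x of U a \<Rightarrow> (if a = i then Some (U (i + 1)) else None)
                 | B a \<Rightarrow> (if a = i + 1 then Some (B i) else None))
      else if i = n \<and> 1 \<le> n then
        (case x of U a \<Rightarrow> (if a = n then Some (B n) else None) | B a \<Rightarrow> None)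
      else None)"

text \<open>Tensor product (signature) rule, Kashiwara convention: a letter on which
  f_i acts gives +, one on which e_i acts gives -, and adjacent pairs "+ -" are
  cancelled recursively.  The function below returns the positions of the
  uncancelled "-" (c counts the currently unmatched "+", j is the position).\<close>
fun unmatched_minus :: "nat \<Rightarrow> nat \<Rightarrow> nat \<Rightarrow> nat \<Rightarrow> letter list \<Rightarrow> nat list" where
  "unmatched_minus n i c j [] = []"
| "unmatched_minus n i c j (x # xs) =
     (if e_letter n i x \<noteq> None then
        (if 0 < c then unmatched_minus n i (c - 1) (Suc j) xs
         else j # unmatched_minus n i c (Suc j) xs)
      else if f_letter n i x \<noteq> None then unmatched_minus n i (Suc c) (Suc j) xs
      else unmatched_minus n i c (Suc j) xs)"

text \<open>e_i on words: acts on the rightmost uncancelled "-", undefined (None) if there is none.\<close>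
definition e_word :: "nat \<Rightarrow> nat \<Rightarrow> letter list \<Rightarrow> letter list option" where
  "e_word n i w =
     (let js = unmatched_minus n i 0 0 w in
      if js = [] then None
      else Some (w[last js := the (e_letter n i (w ! last js))]))"

definition is_column :: "nat \<Rightarrow> letter list \<Rightarrow> bool" where
  "is_column n u = ((\<forall>x\<in>set u. valid_letter n x) \<and> sorted_wrt (letter_less n) u)"

text \<open>N_z(u): number of letters x with x \<le> z or x \<ge> \<overline>z.\<close>
definition Ncount :: "nat \<Rightarrow> letter list \<Rightarrow> nat" where
  "Ncount z u = length (filter (\<lambda>x. case x of U a \<Rightarrow> a \<le> z | B a \<Rightarrow> a \<le> z) u)"

definition admissible_column :: "nat \<Rightarrow> letter list \<Rightarrow> bool" where
  "admissible_column n u = (is_column n u \<and> u \<noteq> [] \<and> (\<forall>z\<in>{1..n}. Ncount z u \<le> z))"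

text \<open>Elements of ACol(C_n): the symbol \<epsilon> or an (admissible) column.\<close>
datatype acol = Eps | Col "letter list"

definition p_acol :: "acol list \<Rightarrow> letter list" where
  "p_acol w = concat (map (\<lambda>c. case c of Eps \<Rightarrow> [] | Col u \<Rightarrow> u) w)"

text \<open>e_i w is defined for w in ACol(C_n)^* iff e_i p(w) is defined.\<close>
definition e_defined_acol :: "nat \<Rightarrow> nat \<Rightarrow> acol list \<Rightarrow> bool" where
  "e_defined_acol n i w = (e_word n i (p_acol w) \<noteq> None)"

definition blk :: "nat \<Rightarrow> letter list" where
  "blk m = map U [1..<m + 1]"

definition blk2 :: "nat \<Rightarrow> nat \<Rightarrow> letter list" where
  "blk2 a b = map U [a + 1..<a + b + 1]"

definition blkbar :: "nat \<Rightarrow> nat \<Rightarrow> letter list" where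
  "blkbar a c = map (\<lambda>j. B (a - j)) [0..<c]"

text \<open>Vertices: Root i = i, Plus i m = im, Minus i m = im^- (with i, m \<ge> 1).\<close>
datatype vtx = Root nat | Plus nat nat | Minus nat nat

definition is_vertex :: "vtx \<Rightarrow> bool" where
  "is_vertex v = (case v of Root i \<Rightarrow> 1 \<le> i
                          | Plus i m \<Rightarrow> 1 \<le> i \<and> 1 \<le> m
                          | Minus i m \<Rightarrow> 1 \<le> i \<and> 1 \<le> m)"

definition level :: "vtx \<Rightarrow> nat" where
  "level v = (case v of Root i \<Rightarrow> i | Plus i m \<Rightarrow> i + m | Minus i m \<Rightarrow> i + m)"

text \<open>A labelling of rank k is given by a function s; only its values at vertices
  of level \<le> k are used.  Valuation q (strand order i < i1 < i1^- < i2 < ...).\<close>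
definition qval :: "(vtx \<Rightarrow> nat) \<Rightarrow> vtx \<Rightarrow> int" where
  "qval s v = (case v of
      Root i \<Rightarrow> int (s (Root i))
    | Plus i m \<Rightarrow> int (s (Root i)) + (\<Sum>m'\<in>{1..m}. int (s (Plus i m')))
                                    - (\<Sum>m'\<in>{1..<m}. int (s (Minus i m')))
    | Minus i m \<Rightarrow> int (s (Root i)) + (\<Sum>m'\<in>{1..m}. int (s (Plus i m')))
                                     - (\<Sum>m'\<in>{1..m}. int (s (Minus i m'))))"

definition n_labelling :: "nat \<Rightarrow> nat \<Rightarrow> (vtx \<Rightarrow> nat) \<Rightarrow> bool" where
  "n_labelling n k s = (\<forall>v. is_vertex v \<and> level v \<le> k \<longrightarrow> 0 \<le> qval s v \<and> qval s v \<le> int n)"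

definition pred_plus :: "nat \<Rightarrow> nat \<Rightarrow> vtx" where
  "pred_plus i m = (if m = 1 then Root i else Minus i (m - 1))"

definition rho :: "(vtx \<Rightarrow> nat) \<Rightarrow> vtx \<Rightarrow> letter list" where
  "rho s v = (case v of
      Root i \<Rightarrow> blk (s (Root i))
    | Plus i m \<Rightarrow> blk2 (nat (qval s (pred_plus i m))) (s (Plus i m))
    | Minus i m \<Rightarrow> blkbar (nat (qval s (Plus i m))) (s (Minus i m)))"

definition level_word :: "(vtx \<Rightarrow> nat) \<Rightarrow> nat \<Rightarrow> letter list" where
  "level_word s t =
     rho s (Root t)
     @ concat (map (\<lambda>j. rho s (Plus j (t - j))) (rev [1..<t]))
     @ concat (map (\<lambda>j. rho s (Minus j (t - j))) [1..<t])"

definition omega_t :: "(vtx \<Rightarrow> nat) \<Rightarrow> nat \<Rightarrow> acol" where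
  "omega_t s t = (if level_word s t = [] then Eps else Col (level_word s t))"

definition GT :: "nat \<Rightarrow> nat \<Rightarrow> (vtx \<Rightarrow> nat) set" where
  "GT k n = {s. n_labelling n k s \<and>
                (\<forall>t\<in>{1..k}. level_word s t = [] \<or> admissible_column n (level_word s t))}"

definition omega :: "nat \<Rightarrow> (vtx \<Rightarrow> nat) \<Rightarrow> acol list" where
  "omega k s = map (omega_t s) [1..<k + 1]"

end

theory Submission
  imports Defs "HOL-Library.Multiset"
begin

inductive runs :: "nat multiset \<Rightarrow> letter list \<Rightarrow> nat multiset \<Rightarrow> bool" where
  rnil: "runs R [] R"
| rU: "1 \<le> a \<Longrightarrow> (a-1) \<in># R \<Longrightarrow> runs (add_mset a (R - {#a-1#})) w R' \<Longrightarrow> runs R (U a # w) R'"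
| rB: "1 \<le> a \<Longrightarrow> a \<in># R \<Longrightarrow> runs (add_mset (a-1) (R - {#a#})) w R' \<Longrightarrow> runs R (B a # w) R'"

lemma runs_append: "runs R u R1 \<Longrightarrow> runs R1 v R2 \<Longrightarrow> runs R (u@v) R2"
  by (induction rule: runs.induct) (auto intro: runs.intros)

lemma runs_U1: "runs (add_mset p M) [U (Suc p)] (add_mset (Suc p) M)"
  by (rule rU) (auto intro: rnil)

lemma runs_B1: "1 \<le> p \<Longrightarrow> runs (add_mset p M) [B p] (add_mset (p-1) M)"
  by (rule rB) (auto intro: rnil)

lemma runs_blk2: "runs (add_mset p M) (blk2 p b) (add_mset (p+b) M)"
proof (induction b)
  case 0 then show ?case by (simp add: blk2_def rnil)
next
  case (Suc b)
  have "blk2 p (Suc b) = blk2 p b @ [U (Suc (p+b))]" by (simp add: blk2_def)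
  then show ?case using runs_append[OF Suc runs_U1[of "p+b" M]] by simp
qed

lemma runs_blkbar: "c \<le> Q \<Longrightarrow> runs (add_mset Q M) (blkbar Q c) (add_mset (Q-c) M)"
proof (induction c)
  case 0 then show ?case by (simp add: blkbar_def rnil)
next
  case (Suc c)
  have "blkbar Q (Suc c) = blkbar Q c @ [B (Q - c)]" by (simp add: blkbar_def)
  moreover have "runs (add_mset (Q-c) M) [B (Q-c)] (add_mset (Q - Suc c) M)"
    using runs_B1[of "Q-c" M] Suc.prems by simp
  ultimately show ?case using runs_append[OF Suc.IH] Suc.prems by simp
qed

lemma plus_run: "runs (M + mset (map f js)) (concat (map (\<lambda>j. blk2 (f j) (g j)) js))
                      (M + mset (map (\<lambda>j. f j + g j) js))"
proof (induction js arbitrary: M)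
  case Nil then show ?case by (simp add: rnil)
next
  case (Cons x js)
  have a: "runs (add_mset (f x) (M + mset (map f js))) (blk2 (f x) (g x))
             (add_mset (f x + g x) (M + mset (map f js)))" by (rule runs_blk2)
  have b: "runs (add_mset (f x + g x) M + mset (map f js)) (concat (map (\<lambda>j. blk2 (f j) (g j)) js))
             (add_mset (f x + g x) M + mset (map (\<lambda>j. f j + g j) js))" by (rule Cons.IH)
  show ?case using runs_append[OF a] b by simp
qed

lemma minus_run: "(\<forall>j\<in>set js. g j \<le> f j) \<Longrightarrow>
   runs (M + mset (map f js)) (concat (map (\<lambda>j. blkbar (f j) (g j)) js))
                      (M + mset (map (\<lambda>j. f j - g j) js))"
proof (induction js arbitrary: M)
  case Nil then show ?case by (simp add: rnil)
next
  case (Cons x js)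
  have a: "runs (add_mset (f x) (M + mset (map f js))) (blkbar (f x) (g x))
             (add_mset (f x - g x) (M + mset (map f js)))" using Cons.prems by (intro runs_blkbar) simp
  have b: "runs (add_mset (f x - g x) M + mset (map f js)) (concat (map (\<lambda>j. blkbar (f j) (g j)) js))
             (add_mset (f x - g x) M + mset (map (\<lambda>j. f j - g j) js))" using Cons.IH[of "add_mset (f x - g x) M"] Cons.prems by simp
  show ?case using runs_append[OF a] b by simp
qed

lemma count_lemma:
  assumes "1 \<le> i" "i < n" "runs R w R'"
  shows "unmatched_minus n i (count R i) j w = []"
  using assms(3)
proof (induction arbitrary: j rule: runs.induct)
  case (rnil R) then show ?case by simp
next
  case (rU a R w R')
  show ?case
  proof (cases "a = Suc i")
    case True
    then have "count R i \<ge> 1" using rU by (simp add: Suc_le_eq)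
    moreover have "count (add_mset a (R - {#a-1#})) i = count R i - 1" using True by simp
    ultimately show ?thesis using True rU assms by (simp add: e_letter_def)
  next
    case F: False
    show ?thesis
    proof (cases "a = i")
      case True
      have "a - 1 \<noteq> i" using True assms(1) by arith
      then have "count (add_mset a (R - {#a-1#})) i = Suc (count R i)" using True by simp
      then show ?thesis using True rU assms by (simp add: e_letter_def f_letter_def)
    next
      case False
      have "count (add_mset a (R - {#a-1#})) i = count R i" using False F rU by auto
      then show ?thesis using False F rU assms by (simp add: e_letter_def f_letter_def)
    qed
  qed
next
  case (rB a R w R')
  show ?case
  proof (cases "a = i")
    case True
    then have "count R i \<ge> 1" using rB by (simp add: Suc_le_eq)
    moreover have "count (add_mset (a-1) (R - {#a#})) i = count R i - 1" using True assms by simp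
    ultimately show ?thesis using True rB assms by (simp add: e_letter_def)
  next
    case F: False
    show ?thesis
    proof (cases "a = Suc i")
      case True
      have "count (add_mset (a-1) (R - {#a#})) i = Suc (count R i)" using True assms by simp
      then show ?thesis using True rB assms by (simp add: e_letter_def f_letter_def)
    next
      case False
      have "count (add_mset (a-1) (R - {#a#})) i = count R i" using False F rB by auto
      then show ?thesis using False F rB assms by (simp add: e_letter_def f_letter_def)
    qed
  qed
qed

definition G :: "nat \<Rightarrow> nat multiset \<Rightarrow> nat" where
  "G n R = size (filter_mset (\<lambda>r. n \<le> r) R)"

lemma G_add: "G n (add_mset x R) = G n R + (if n \<le> x then 1 else 0)"
  by (simp add: G_def)

lemma G_diff: "x \<in># R \<Longrightarrow> G n R = G n (R - {#x#}) + (if n \<le> x then 1 else 0)"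
  by (metis G_add insert_DiffM)

lemma G_lemma:
  assumes "1 \<le> n" "runs R w R'"
  shows "unmatched_minus n n (G n R) j w = []"
  using assms(2)
proof (induction arbitrary: j rule: runs.induct)
  case (rnil R) then show ?case by simp
next
  case (rU a R w R')
  have g: "G n (add_mset a (R - {#a-1#})) = G n R - (if n \<le> a - 1 then 1 else 0) + (if n \<le> a then 1 else 0)"
    using G_diff[OF rU(2), of n] G_add by simp
  show ?case
  proof (cases "a = n")
    case True
    have "\<not> n \<le> n - 1" using assms(1) by arith
    then show ?thesis using True g rU assms by (simp add: e_letter_def f_letter_def)
  next
    case False
    then have "G n (add_mset a (R - {#a-1#})) = G n R" using G_diff[OF rU(2), of n] G_add[of n a "R - {#a-1#}"] rU(1) by auto
    then show ?thesis using False rU assms by (simp add: e_letter_def f_letter_def)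
  qed
next
  case (rB a R w R')
  have g: "G n (add_mset (a-1) (R - {#a#})) = G n R - (if n \<le> a then 1 else 0) + (if n \<le> a - 1 then 1 else 0)"
    using G_diff[OF rB(2), of n] G_add by simp
  show ?case
  proof (cases "a = n")
    case True
    have g1: "G n R \<ge> 1" using G_diff[OF rB(2), of n] True by simp
    have "\<not> n \<le> n - 1" using assms(1) by arith
    then show ?thesis using g1 True g rB assms by (simp add: e_letter_def f_letter_def)
  next
    case False
    then have "G n (add_mset (a-1) (R - {#a#})) = G n R" using G_diff[OF rB(2), of n] G_add[of n "a-1" "R - {#a#}"] rB(1) by auto
    then show ?thesis using False rB assms by (simp add: e_letter_def f_letter_def)
  qed
qed

lemma qval_plus: assumes "1 \<le> m" shows "qval s (Plus i m) = qval s (pred_plus i m) + int (s (Plus i m))"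
proof (cases m)
  case 0 then show ?thesis using assms by simp
next
  case (Suc m')
  then show ?thesis
    by (cases "m' = 0") (auto simp: qval_def pred_plus_def atLeastLessThanSuc_atLeastAtMost)
qed

lemma qval_minus: assumes "1 \<le> m" shows "qval s (Minus i m) = qval s (Plus i m) - int (s (Minus i m))"
proof (cases m)
  case 0 then show ?thesis using assms by simp
next
  case (Suc m')
  then show ?thesis by (auto simp: qval_def atLeastLessThanSuc_atLeastAtMost)
qed

definition st :: "(vtx \<Rightarrow> nat) \<Rightarrow> nat \<Rightarrow> nat \<Rightarrow> nat" where
  "st T L j = (if L < j then 0 else if j = L then T (Root j) else nat (qval T (Minus j (L - j))))"

definition SS :: "(vtx \<Rightarrow> nat) \<Rightarrow> nat \<Rightarrow> nat \<Rightarrow> nat multiset" where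
  "SS T k L = mset (map (st T L) [1..<k+1])"

lemma level_run:
  assumes nl: "n_labelling n k T" and t: "1 \<le> t" "t \<le> k"
  shows "runs (SS T k (t-1)) (level_word T t) (SS T k t)"
proof -
  have nn: "\<And>v. is_vertex v \<Longrightarrow> level v \<le> k \<Longrightarrow> 0 \<le> qval T v"
    using nl unfolding n_labelling_def by blast
  define f where "f j = nat (qval T (pred_plus j (t-j)))" for j
  define g where "g j = T (Plus j (t-j))" for j
  define h where "h j = nat (qval T (Plus j (t-j)))" for j
  define g' where "g' j = T (Minus j (t-j))" for j
  have F: "f j = st T (t-1) j" if "j \<in> set [1..<t]" for j
  proof (cases "j = t - 1")
    case True then show ?thesis using that by (simp add: f_def st_def pred_plus_def qval_def)
  next
    case False
    then have "t - j \<noteq> 1" "\<not> t - 1 < j" "t - j - 1 = t - 1 - j" using that by auto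
    then show ?thesis using False by (simp add: f_def st_def pred_plus_def)
  qed
  have H: "h j = f j + g j" if "j \<in> set [1..<t]" for j
  proof -
    have "0 \<le> qval T (pred_plus j (t-j))"
      apply (rule nn) using that t by (auto simp: pred_plus_def is_vertex_def level_def)
    moreover have "qval T (Plus j (t-j)) = qval T (pred_plus j (t-j)) + int (T (Plus j (t-j)))"
      using that by (intro qval_plus) auto
    ultimately show ?thesis by (simp add: h_def f_def g_def nat_add_distrib)
  qed
  have G1: "g' j \<le> h j" and G2: "h j - g' j = st T t j" if "j \<in> set [1..<t]" for j
  proof -
    have "0 \<le> qval T (Minus j (t-j))"
      apply (rule nn) using that t by (auto simp: is_vertex_def level_def)
    then show "g' j \<le> h j" "h j - g' j = st T t j"
      using qval_minus[of "t-j" T j] that by (auto simp: h_def g'_def st_def)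
  qed
  have ups: "[1..<k+1] = [1..<t] @ t # [Suc t..<k+1]"
  proof -
    have "[1..<k+1] = [1..<t] @ [t..<t+(k+1-t)]" using t upt_add_eq_append[of 1 t "k+1-t"] by simp
    then have "[1..<k+1] = [1..<t] @ [t..<k+1]" using t by simp
    also have "[t..<k+1] = t # [Suc t..<k+1]" using t by (simp add: upt_conv_Cons)
    finally show ?thesis .
  qed
  define R0 where "R0 = mset (map (\<lambda>_. 0::nat) [Suc t..<k+1])"
  have R1: "mset (map (st T (t-1)) [Suc t..<k+1]) = R0" "mset (map (st T t) [Suc t..<k+1]) = R0"
  proof -
    have "map (st T L) [Suc t..<k+1] = map (\<lambda>_. 0::nat) [Suc t..<k+1]" if "L \<le> t" for L
      by (rule map_cong) (use that in \<open>auto simp: st_def\<close>)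
    then show "mset (map (st T (t-1)) [Suc t..<k+1]) = R0" "mset (map (st T t) [Suc t..<k+1]) = R0"
      unfolding R0_def by (metis diff_le_self, metis order_refl)
  qed
  define A where "A = mset (map (st T (t-1)) [1..<t])"
  have Aeq: "mset (map f (rev [1..<t])) = A"
    unfolding A_def by (simp only: mset_map mset_rev) (rule image_mset_cong, rule F, simp)
  have Heq: "mset (map (\<lambda>j. f j + g j) (rev [1..<t])) = mset (map h [1..<t])"
    by (simp only: mset_map mset_rev) (rule image_mset_cong, rule H[symmetric], simp)
  have Seq: "mset (map (\<lambda>j. h j - g' j) [1..<t]) = mset (map (st T t) [1..<t])"
    by (rule arg_cong[where f=mset], rule map_cong, simp, rule G2, simp)
  have S0: "SS T k (t-1) = add_mset 0 (A + R0)"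
    unfolding SS_def A_def using ups R1 t by (simp add: st_def)
  have S1: "SS T k t = add_mset (T (Root t)) R0 + mset (map (st T t) [1..<t])"
    unfolding SS_def using ups R1 t by (simp add: st_def)
  have lw: "level_word T t = blk2 0 (T (Root t))
      @ concat (map (\<lambda>j. blk2 (f j) (g j)) (rev [1..<t]))
      @ concat (map (\<lambda>j. blkbar (h j) (g' j)) [1..<t])"
    by (simp add: level_word_def rho_def blk_def blk2_def f_def g_def h_def g'_def)
  have r1: "runs (add_mset 0 (A + R0)) (blk2 0 (T (Root t))) (add_mset (T (Root t)) (A + R0))"
    using runs_blk2[of 0 "A + R0" "T (Root t)"] by simp
  have r2: "runs (add_mset (T (Root t)) R0 + mset (map f (rev [1..<t])))
             (concat (map (\<lambda>j. blk2 (f j) (g j)) (rev [1..<t])))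
             (add_mset (T (Root t)) R0 + mset (map (\<lambda>j. f j + g j) (rev [1..<t])))"
    by (rule plus_run)
  have r3: "runs (add_mset (T (Root t)) R0 + mset (map h [1..<t]))
             (concat (map (\<lambda>j. blkbar (h j) (g' j)) [1..<t]))
             (add_mset (T (Root t)) R0 + mset (map (\<lambda>j. h j - g' j) [1..<t]))"
    by (rule minus_run) (use G1 in auto)
  have "runs (add_mset 0 (A + R0)) (level_word T t) (add_mset (T (Root t)) R0 + mset (map (\<lambda>j. h j - g' j) [1..<t]))"
    unfolding lw
    apply (rule runs_append[OF r1])
    apply (rule runs_append)
    using r2 r3 Aeq Heq by (simp_all add: ac_simps)
  then show ?thesis using S0 S1 Seq by simp
qed

lemma p_omega: "p_acol (omega k T) = concat (map (level_word T) [1..<k+1])"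
  unfolding p_acol_def omega_def by (rule arg_cong[where f=concat]) (auto simp: omega_t_def)

lemma all_runs:
  assumes nl: "n_labelling n k T"
  shows "L \<le> k \<Longrightarrow> runs (SS T k 0) (concat (map (level_word T) [1..<L+1])) (SS T k L)"
proof (induction L)
  case 0 then show ?case by (simp add: rnil)
next
  case (Suc L)
  have "runs (SS T k (Suc L - 1)) (level_word T (Suc L)) (SS T k (Suc L))"
    using level_run[OF nl, of "Suc L"] Suc.prems by simp
  then show ?case using runs_append[OF Suc.IH] Suc.prems by simp
qed

lemma SS0: "x \<in># SS T k 0 \<Longrightarrow> x = 0"
  unfolding SS_def st_def by auto

theorem corollary5p2:
  fixes n k :: nat and T :: "vtx \<Rightarrow> nat"
  assumes "1 \<le> k" and "T \<in> GT k n"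
  shows "\<forall>i\<in>{1..n}. \<not> e_defined_acol n i (omega k T)"
proof
  fix i assume i: "i \<in> {1..n}"
  have nl: "n_labelling n k T" using assms(2) by (simp add: GT_def)
  have r: "runs (SS T k 0) (p_acol (omega k T)) (SS T k k)"
    using all_runs[OF nl, of k] by (simp add: p_omega)
  have "unmatched_minus n i 0 0 (p_acol (omega k T)) = []"
  proof (cases "i < n")
    case True
    have "count (SS T k 0) i = 0" using SS0 i by (metis atLeastAtMost_iff count_inI not_one_le_zero)
    then show ?thesis using count_lemma[OF _ True r, of 0] i by simp
  next
    case False
    then have "i = n" using i by simp
    have "filter_mset (\<lambda>r. n \<le> r) (SS T k 0) = {#}"
    proof (rule ccontr)
      assume "filter_mset (\<lambda>r. n \<le> r) (SS T k 0) \<noteq> {#}"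
      then obtain x where "x \<in># filter_mset (\<lambda>r. n \<le> r) (SS T k 0)" by blast
      then show False using SS0[of x T k] i by auto
    qed
    then have "G n (SS T k 0) = 0" unfolding G_def by simp
    moreover have "unmatched_minus n n (G n (SS T k 0)) 0 (p_acol (omega k T)) = []"
      using i r by (intro G_lemma) auto
    ultimately show ?thesis using \<open>i = n\<close> by simp
  qed
  then show "\<not> e_defined_acol n i (omega k T)"
    by (simp add: e_defined_acol_def e_word_def Let_def)
qed

end
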